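(* Let $m=2$ attributes take values in $\{1,\dots,d\}$, let $p(x,z)=p(z)p(x\mid z)$ be a training distribution with attribute support $\mathcal{Z}^{\mathsf{train}}$, and suppose $p(\cdot\mid z)$ is an additive energy distribution, not uniform, for every $z\in\mathcal{Z}^{\times}$. Suppose $\mathsf{DAff}(\mathcal{Z}^{\mathsf{train}})\ne\mathcal{Z}^{\times}$. Then there exists an additive energy model $\hat p(x\mid z)=\frac{1}{\hat{\mathbb{Z}}(z)}\exp(-\langle\sigma(z),\hat E(x)\rangle)$ that maximizes the likelihood and exactly matches the training distributions, i.e. $\hat p(\cdot\mid z)=p(\cdot\mid z)$ for all $z\in\mathcal{Z}^{\mathsf{train}}$, but such that $\hat p(\cdot\mid z)\ne p(\cdot\mid z)$ for some $z\in\mathcal{Z}^{\times}$.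
   Context: $\sigma(z)\in\{0,1\}^{2d}$ is the concatenation of the one-hot encodings of $z_1,z_2$. An additive energy distribution family is $p(x\mid z)=\frac{1}{\mathbb{Z}(z)}\exp(-\langle\sigma(z),E(x)\rangle)$ with $E:\mathbb{R}^n\to\mathbb{R}^{2d}$ and $\mathbb{Z}(z)=\int\exp(-\langle\sigma(z),E(x)\rangle)dx<\infty$. $\mathcal{Z}_i^{\mathsf{train}}$ is the set of values of the $i$-th coordinate on $\mathcal{Z}^{\mathsf{train}}$ and $\mathcal{Z}^{\times}=\mathcal{Z}_1^{\mathsf{train}}\times\mathcal{Z}_2^{\mathsf{train}}$. For finite $\mathcal{A}=\{z^{(1)},\dots,z^{(k)}\}$, $\mathsf{DAff}(\mathcal{A})=\{z\in\{1,\dots,d\}^2:\exists\alpha\in\mathbb{R}^k,\ \sum_i\alpha_i=1,\ \sigma(z)=\sum_i\alpha_i\sigma(z^{(i)})\}$. *)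

theory Defs
  imports "HOL-Analysis.Analysis"
begin

text \<open>The embedding sigma(z) in {0,1}^(2d)
  is the concatenation of the one-hot encodings of z1 and z2; coordinates are indexed by
  {1..2d}: coordinate z1 for the first block, coordinate d + z2 for the second block.
  Outside {1..2d} the function is 0.\<close>

definition attrs :: "nat \<Rightarrow> (nat \<times> nat) set" where
  "attrs d = {1..d} \<times> {1..d}"

definition sigma :: "nat \<Rightarrow> nat \<times> nat \<Rightarrow> nat \<Rightarrow> real" where
  "sigma d z i = (if i = fst z then 1 else 0) + (if i = d + snd z then 1 else 0)"

definition pair_energy :: "nat \<Rightarrow> nat \<times> nat \<Rightarrow> (nat \<Rightarrow> real) \<Rightarrow> real" where
  "pair_energy d z e = (\<Sum>i\<in>{1..2*d}. sigma d z i * e i)"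

definition unnorm :: "nat \<Rightarrow> ('a \<Rightarrow> nat \<Rightarrow> real) \<Rightarrow> nat \<times> nat \<Rightarrow> 'a \<Rightarrow> real" where
  "unnorm d E z x = exp (- pair_energy d z (E x))"

definition partition :: "nat \<Rightarrow> ('a::euclidean_space \<Rightarrow> nat \<Rightarrow> real) \<Rightarrow> nat \<times> nat \<Rightarrow> real" where
  "partition d E z = (\<integral>x. unnorm d E z x \<partial>lborel)"

definition aed :: "nat \<Rightarrow> ('a::euclidean_space \<Rightarrow> nat \<Rightarrow> real) \<Rightarrow> nat \<times> nat \<Rightarrow> 'a \<Rightarrow> real" where
  "aed d E z x = unnorm d E z x / partition d E z"

definition aed_wf :: "nat \<Rightarrow> ('a::euclidean_space \<Rightarrow> nat \<Rightarrow> real) \<Rightarrow> nat \<times> nat \<Rightarrow> bool" where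
  "aed_wf d E z \<longleftrightarrow> integrable lborel (unnorm d E z)"

definition same_dist :: "('a::euclidean_space \<Rightarrow> real) \<Rightarrow> ('a \<Rightarrow> real) \<Rightarrow> bool" where
  "same_dist p q \<longleftrightarrow> (AE x in lborel. p x = q x)"

definition uniform_dist :: "('a::euclidean_space \<Rightarrow> real) \<Rightarrow> bool" where
  "uniform_dist p \<longleftrightarrow> (\<exists>c. same_dist p (\<lambda>_. c))"

definition Zcross :: "(nat \<times> nat) set \<Rightarrow> (nat \<times> nat) set" where
  "Zcross Z = (fst ` Z) \<times> (snd ` Z)"

definition DAff :: "nat \<Rightarrow> (nat \<times> nat) set \<Rightarrow> (nat \<times> nat) set" where
  "DAff d A = {z \<in> attrs d. \<exists>\<alpha> :: nat \<times> nat \<Rightarrow> real.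
      (\<Sum>a\<in>A. \<alpha> a) = 1 \<and> sigma d z = (\<lambda>i. \<Sum>a\<in>A. \<alpha> a * sigma d a i)}"

end

theory Submission imports Defs begin

lemma AE_pos_set:
  fixes A :: "'a::euclidean_space set"
  assumes "AE x in lborel. P x" "A \<in> sets lborel" "emeasure lborel A > 0"
  shows "\<exists>x\<in>A. P x"
proof (rule ccontr)
  assume "\<not> (\<exists>x\<in>A. P x)"
  from assms(1) obtain N where N: "{x \<in> space lborel. \<not> P x} \<subseteq> N" "emeasure lborel N = 0" "N \<in> sets lborel"
    by (rule AE_E)
  have "A \<subseteq> N" using N(1) \<open>\<not> (\<exists>x\<in>A. P x)\<close> by auto
  then have "emeasure lborel A \<le> emeasure lborel N" using N(3) by (rule emeasure_mono)
  with N(2) assms(3) show False by simp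
qed

lemma box1_pos: "emeasure lborel (box (0::'a::euclidean_space) One) > 0"
  by (simp add: inner_diff_left)

lemma box2_pos: "emeasure lborel (box (One::'a::euclidean_space) (2 *\<^sub>R One)) > 0"
  by (simp add: inner_diff_left)

lemma boxes_disj: "box (0::'a::euclidean_space) One \<inter> box One (2 *\<^sub>R One) = {}"
proof -
  obtain b :: 'a where b: "b \<in> Basis" using nonempty_Basis by blast
  show ?thesis using b by (auto simp: mem_box) (metis b less_asym)
qed

lemma integral_pos:
  fixes h :: "'a::euclidean_space \<Rightarrow> real"
  assumes "integrable lborel h" "\<And>x. h x > 0"
  shows "integral\<^sup>L lborel h > 0"
proof -
  have ge: "integral\<^sup>L lborel h \<ge> 0" using assms by (simp add: less_imp_le)
  have "integral\<^sup>L lborel h \<noteq> 0"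
  proof
    assume "integral\<^sup>L lborel h = 0"
    then have "AE x in lborel. h x = 0" using integral_nonneg_eq_0_iff_AE[OF assms(1)] assms(2)
      by (simp add: less_imp_le)
    have "box (0::'a) One \<in> sets lborel" by simp
    from AE_pos_set[OF \<open>AE x in lborel. h x = 0\<close> this box1_pos] obtain x where "h x = 0" by blast
    with assms(2)[of x] show False by simp
  qed
  with ge show ?thesis by simp
qed

lemma pe_attrs:
  assumes "z \<in> attrs d"
  shows "pair_energy d z e = e (fst z) + e (d + snd z)"
proof -
  have "pair_energy d z e = (\<Sum>i\<in>{1..2*d}. (if i = fst z then e i else 0) + (if i = d + snd z then e i else 0))"
    unfolding pair_energy_def sigma_def by (intro sum.cong) auto
  also have "\<dots> = e (fst z) + e (d + snd z)"
    using assms by (simp add: sum.distrib attrs_def mem_Times_iff)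
  finally show ?thesis .
qed

lemma reach_DAff:
  assumes Z: "Z \<subseteq> attrs d" and i0: "i0 \<le> d"
  and G: "G = {(fst a, d + snd a) | a. a \<in> Z} \<union> {(d + snd a, fst a) | a. a \<in> Z}"
  and r: "(i0, n) \<in> G\<^sup>*"
  shows "(d < n \<longrightarrow> (\<exists>\<alpha>. sum \<alpha> Z = 1 \<and> sigma d (i0, n-d) = (\<lambda>i. \<Sum>a\<in>Z. \<alpha> a * sigma d a i)))
    \<and> (n \<le> d \<longrightarrow> (\<exists>\<alpha>. sum \<alpha> Z = 0 \<and> (\<lambda>i. (if i=i0 then 1 else 0) - (if i = n then 1 else 0)) = (\<lambda>i. \<Sum>a\<in>Z. \<alpha> a * sigma d a i)))"
  using r
proof (induction rule: rtrancl_induct)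
  case base
  show ?case using i0 by (auto intro!: exI[of _ "\<lambda>_. 0"])
next
  case (step n m)
  have fin: "finite Z" using Z finite_subset[of Z "attrs d"] by (auto simp: attrs_def)
  from step.hyps(2) consider (row) a where "a \<in> Z" "n = fst a" "m = d + snd a"
     | (col) a where "a \<in> Z" "n = d + snd a" "m = fst a" unfolding G by blast
  then show ?case
  proof cases
    case row
    have a: "1 \<le> fst a" "fst a \<le> d" "1 \<le> snd a" "snd a \<le> d" using row(1) Z by (auto simp: attrs_def mem_Times_iff)
    from step.IH row a obtain \<alpha> where al: "sum \<alpha> Z = 0"
      "(\<lambda>i. (if i=i0 then 1 else 0) - (if i = n then 1 else 0)) = (\<lambda>i. \<Sum>a\<in>Z. \<alpha> a * sigma d a i)" by auto
    define \<beta> where "\<beta> = (\<lambda>b. \<alpha> b + (if b = a then 1 else 0))"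
    have "sum \<beta> Z = 1" using al(1) fin row(1) by (simp add: \<beta>_def sum.distrib)
    moreover have "sigma d (i0, m-d) = (\<lambda>i. \<Sum>b\<in>Z. \<beta> b * sigma d b i)"
    proof
      fix i
      have "(\<Sum>b\<in>Z. \<beta> b * sigma d b i) = (\<Sum>b\<in>Z. \<alpha> b * sigma d b i) + (\<Sum>b\<in>Z. (if b = a then sigma d b i else 0))"
        unfolding sum.distrib[symmetric] by (intro sum.cong) (auto simp: \<beta>_def distrib_right)
      also have "\<dots> = ((if i=i0 then 1 else 0) - (if i = n then 1 else 0)) + sigma d a i"
        using fun_cong[OF al(2), of i] fin row(1) by simp
      also have "\<dots> = sigma d (i0, m-d) i" using row by (simp add: sigma_def)
      finally show "sigma d (i0, m-d) i = (\<Sum>b\<in>Z. \<beta> b * sigma d b i)" by simp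
    qed
    ultimately show ?thesis using row a by auto
  next
    case col
    have a: "1 \<le> fst a" "fst a \<le> d" "1 \<le> snd a" "snd a \<le> d" using col(1) Z by (auto simp: attrs_def mem_Times_iff)
    from step.IH col a obtain \<alpha> where al: "sum \<alpha> Z = 1"
      "sigma d (i0, n-d) = (\<lambda>i. \<Sum>a\<in>Z. \<alpha> a * sigma d a i)" by auto
    define \<beta> where "\<beta> = (\<lambda>b. \<alpha> b - (if b = a then 1 else 0))"
    have "sum \<beta> Z = 0" using al(1) fin col(1) by (simp add: \<beta>_def sum_subtractf)
    moreover have "(\<lambda>i. (if i=i0 then 1 else 0) - (if i = m then 1 else 0)) = (\<lambda>i. \<Sum>b\<in>Z. \<beta> b * sigma d b i)"
    proof
      fix i
      have "(\<Sum>b\<in>Z. \<beta> b * sigma d b i) = (\<Sum>b\<in>Z. \<alpha> b * sigma d b i) - (\<Sum>b\<in>Z. (if b = a then sigma d b i else 0))"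
        unfolding sum_subtractf[symmetric] by (intro sum.cong) (auto simp: \<beta>_def left_diff_distrib)
      also have "\<dots> = sigma d (i0, n-d) i - sigma d a i"
        using fun_cong[OF al(2), of i] fin col(1) by simp
      also have "\<dots> = (if i=i0 then 1 else 0) - (if i = m then 1 else 0)" using col by (simp add: sigma_def)
      finally show "(if i=i0 then 1 else 0) - (if i = m then 1 else 0) = (\<Sum>b\<in>Z. \<beta> b * sigma d b i)" by simp
    qed
    ultimately show ?thesis using col a by auto
  qed
qed

lemma pe_lin: "pair_energy d z (\<lambda>i. e i + c * v i) = pair_energy d z e + c * pair_energy d z v"
  unfolding pair_energy_def by (simp add: sum.distrib sum_distrib_left algebra_simps)

theorem theorem10:
  fixes d :: nat and Ztrain :: "(nat \<times> nat) set"
    and E :: "'a::euclidean_space \<Rightarrow> nat \<Rightarrow> real"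
  assumes "d \<ge> 1"
    and "Ztrain \<subseteq> attrs d" and "Ztrain \<noteq> {}"
    and "\<forall>z\<in>Zcross Ztrain. aed_wf d E z"
    and "\<forall>z\<in>Zcross Ztrain. \<not> uniform_dist (aed d E z)"
    and "DAff d Ztrain \<noteq> Zcross Ztrain"
  shows "\<exists>Ehat :: 'a \<Rightarrow> nat \<Rightarrow> real.
           (\<forall>z\<in>Zcross Ztrain. aed_wf d Ehat z)
         \<and> (\<forall>z\<in>Ztrain. same_dist (aed d Ehat z) (aed d E z))
         \<and> (\<exists>z\<in>Zcross Ztrain. \<not> same_dist (aed d Ehat z) (aed d E z))"
proof -
  let ?Z = Ztrain
  have Zsub: "?Z \<subseteq> attrs d" using assms(2) .
  have fin: "finite ?Z" using Zsub finite_subset[of ?Z "attrs d"] by (auto simp: attrs_def)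
  have crossub: "Zcross ?Z \<subseteq> attrs d" using Zsub by (auto simp: Zcross_def attrs_def)
  have "DAff d ?Z \<subseteq> Zcross ?Z"
  proof
    fix z assume z: "z \<in> DAff d ?Z"
    then obtain \<alpha> where za: "z \<in> attrs d" "sigma d z = (\<lambda>i. \<Sum>a\<in>?Z. \<alpha> a * sigma d a i)"
      unfolding DAff_def by blast
    have zb: "1 \<le> fst z" "fst z \<le> d" "1 \<le> snd z" "snd z \<le> d" using za(1) by (auto simp: attrs_def mem_Times_iff)
    have "fst z \<in> fst ` ?Z"
    proof (rule ccontr)
      assume nf: "fst z \<notin> fst ` ?Z"
      have "sigma d z (fst z) = 1" using zb by (simp add: sigma_def)
      moreover have "(\<Sum>a\<in>?Z. \<alpha> a * sigma d a (fst z)) = 0"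
      proof (intro sum.neutral ballI)
        fix a assume "a \<in> ?Z"
        then have "fst a \<noteq> fst z" using nf by (metis image_eqI)
        moreover have "1 \<le> snd a" using \<open>a \<in> ?Z\<close> Zsub by (auto simp: attrs_def mem_Times_iff)
        ultimately show "\<alpha> a * sigma d a (fst z) = 0" using zb by (simp add: sigma_def)
      qed
      ultimately show False using fun_cong[OF za(2), of "fst z"] by simp
    qed
    moreover have "snd z \<in> snd ` ?Z"
    proof (rule ccontr)
      assume nf: "snd z \<notin> snd ` ?Z"
      have "sigma d z (d + snd z) = 1" using zb by (simp add: sigma_def)
      moreover have "(\<Sum>a\<in>?Z. \<alpha> a * sigma d a (d + snd z)) = 0"
      proof (intro sum.neutral ballI)
        fix a assume "a \<in> ?Z"
        then have "snd a \<noteq> snd z" using nf by (metis image_eqI)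
        moreover have "fst a \<le> d" using \<open>a \<in> ?Z\<close> Zsub by (auto simp: attrs_def mem_Times_iff)
        ultimately show "\<alpha> a * sigma d a (d + snd z) = 0" using zb by (simp add: sigma_def)
      qed
      ultimately show False using fun_cong[OF za(2), of "d + snd z"] by simp
    qed
    ultimately show "z \<in> Zcross ?Z" by (simp add: Zcross_def mem_Times_iff)
  qed
  with assms(6) obtain z0 where z0: "z0 \<in> Zcross ?Z" "z0 \<notin> DAff d ?Z" by blast
  obtain i0 j0 where z0e: "z0 = (i0, j0)" by force
  have ij: "1 \<le> i0" "i0 \<le> d" "1 \<le> j0" "j0 \<le> d" using z0(1) crossub z0e by (auto simp: attrs_def)
  define G where "G = {(fst a, d + snd a) | a. a \<in> ?Z} \<union> {(d + snd a, fst a) | a. a \<in> ?Z}"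
  have notr: "(i0, d + j0) \<notin> G\<^sup>*"
  proof
    assume "(i0, d + j0) \<in> G\<^sup>*"
    from reach_DAff[OF Zsub ij(2) G_def this] ij obtain \<alpha> where
      "sum \<alpha> ?Z = 1" "sigma d (i0, j0) = (\<lambda>i. \<Sum>a\<in>?Z. \<alpha> a * sigma d a i)" by auto
    then have "z0 \<in> DAff d ?Z" using z0(1) crossub z0e unfolding DAff_def by blast
    with z0(2) show False by simp
  qed
  define v where "v n = (if (i0, n) \<in> G\<^sup>* then (if n \<le> d then 1 else -1) else (0::real))" for n
  have s_train: "pair_energy d a v = 0" if a: "a \<in> ?Z" for a
  proof -
    have ab: "1 \<le> fst a" "fst a \<le> d" "1 \<le> snd a" using a Zsub by (auto simp: attrs_def mem_Times_iff)
    have e1: "(fst a, d + snd a) \<in> G" "(d + snd a, fst a) \<in> G" using a unfolding G_def by blast+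
    have "(i0, fst a) \<in> G\<^sup>* \<longleftrightarrow> (i0, d + snd a) \<in> G\<^sup>*"
      using e1 rtrancl_into_rtrancl by metis
    then show ?thesis using pe_attrs[of a d v] a Zsub ab by (auto simp: v_def)
  qed
  have s_z0: "pair_energy d z0 v = 1"
    using pe_attrs[of z0 d v] z0(1) crossub z0e ij notr by (auto simp: v_def)
  define B :: "'a set" where "B = box 0 One"
  define Ehat :: "'a \<Rightarrow> nat \<Rightarrow> real" where "Ehat x i = E x i + indicator B x * v i" for x i
  have un: "unnorm d Ehat z = (\<lambda>x. unnorm d E z x + indicator B x *\<^sub>R ((exp (- pair_energy d z v) - 1) * unnorm d E z x))" for z
  proof
    fix x
    have "unnorm d Ehat z x = unnorm d E z x * exp (- (indicator B x * pair_energy d z v))"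
      unfolding unnorm_def Ehat_def pe_lin by (simp add: exp_add[symmetric])
    then show "unnorm d Ehat z x = unnorm d E z x + indicator B x *\<^sub>R ((exp (- pair_energy d z v) - 1) * unnorm d E z x)"
      by (simp add: indicator_def algebra_simps)
  qed
  have Bs: "B \<in> sets lborel" unfolding B_def by simp
  have wf: "aed_wf d Ehat z" if "z \<in> Zcross ?Z" for z
  proof -
    have "integrable lborel (unnorm d E z)" using assms(4) that by (simp add: aed_wf_def)
    then show ?thesis unfolding aed_wf_def un
      by (intro Bochner_Integration.integrable_add integrable_mult_indicator[OF Bs] integrable_mult_right)
  qed
  have tr: "same_dist (aed d Ehat z) (aed d E z)" if "z \<in> ?Z" for z
  proof -
    have "unnorm d Ehat z = unnorm d E z" unfolding un s_train[OF that] by simp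
    then show ?thesis unfolding same_dist_def aed_def partition_def by simp
  qed
  have bad: "\<not> same_dist (aed d Ehat z0) (aed d E z0)"
  proof
    assume sd: "same_dist (aed d Ehat z0) (aed d E z0)"
    define u where "u = unnorm d E z0"
    define g where "g x = exp (- indicator B x :: real)" for x
    have uh: "unnorm d Ehat z0 x = u x * g x" for x
      unfolding un s_z0 u_def g_def by (simp add: indicator_def algebra_simps)
    have upos: "u x > 0" for x unfolding u_def unnorm_def by simp
    have gpos: "g x > 0" for x unfolding g_def by simp
    have iu: "integrable lborel u" using assms(4) z0(1) by (simp add: aed_wf_def u_def)
    have iuh: "integrable lborel (unnorm d Ehat z0)" using wf[OF z0(1)] by (simp add: aed_wf_def)
    define P where "P = partition d E z0"
    define Ph where "Ph = partition d Ehat z0"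
    have P: "P > 0" unfolding P_def partition_def u_def[symmetric] by (rule integral_pos[OF iu upos])
    have Ph: "Ph > 0" unfolding Ph_def partition_def
      by (rule integral_pos[OF iuh]) (simp add: uh upos gpos)
    have "AE x in lborel. u x * g x / Ph = u x / P"
      using sd unfolding same_dist_def aed_def uh P_def Ph_def u_def .
    then have ae: "AE x in lborel. g x = Ph / P"
    proof (rule AE_mp, intro AE_I2 impI)
      fix x assume "u x * g x / Ph = u x / P"
      then show "g x = Ph / P" using P Ph upos[of x] by (simp add: field_simps)
    qed
    have B2s: "box (One::'a) (2 *\<^sub>R One) \<in> sets lborel" by simp
    from AE_pos_set[OF ae Bs] box1_pos obtain x1 where x1: "x1 \<in> B" "g x1 = Ph / P" unfolding B_def by blast
    from AE_pos_set[OF ae B2s box2_pos] obtain x2 where x2: "x2 \<in> box One (2 *\<^sub>R One)" "g x2 = Ph / P" by blast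
    have "x2 \<notin> B" using x2(1) boxes_disj unfolding B_def by blast
    then have "g x1 = exp (-1)" "g x2 = 1" using x1(1) by (simp_all add: g_def)
    with x1(2) x2(2) show False by simp
  qed
  show ?thesis
    by (rule exI[of _ Ehat]) (use wf tr bad z0(1) in blast)
qed

end
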